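(* Let $R$ be a ring in which the set $\operatorname{Nil}(R)$ of nilpotent elements is a subring. Then every idempotent of the factor ring $R/\operatorname{Nil}^*(R)$ is central in $R/\operatorname{Nil}^*(R)$.
   Context: Rings are associative and not necessarily unital. $\operatorname{Nil}^*(R)$ denotes the upper nilradical of $R$, i.e. the sum of all nil two-sided ideals of $R$. *)

theory Defs
  imports Main
begin

text \<open>Rings are associative, not necessarily unital: Isabelle's type class ring
(semiring + ab_group_add) has no unit. Positive powers are defined explicitly.\<close>

fun rpow :: "'a::ring \<Rightarrow> nat \<Rightarrow> 'a" where
  "rpow x 0 = x"
| "rpow x (Suc n) = x * rpow x n"
(* rpow x n = x^(n+1) *)

definition nilpotent_el :: "'a::ring \<Rightarrow> bool" where
  "nilpotent_el x \<longleftrightarrow> (\<exists>n. rpow x n = 0)"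

definition Nil_set :: "'a::ring set" where
  "Nil_set = {x. nilpotent_el x}"

definition is_subring :: "'a::ring set \<Rightarrow> bool" where
  "is_subring S \<longleftrightarrow> 0 \<in> S \<and> (\<forall>x\<in>S. \<forall>y\<in>S. x + y \<in> S \<and> x - y \<in> S \<and> x * y \<in> S)"

definition is_ideal :: "'a::ring set \<Rightarrow> bool" where
  "is_ideal I \<longleftrightarrow> 0 \<in> I \<and> (\<forall>x\<in>I. \<forall>y\<in>I. x - y \<in> I)
     \<and> (\<forall>x\<in>I. \<forall>r. r * x \<in> I \<and> x * r \<in> I)"

definition nil_ideal :: "'a::ring set \<Rightarrow> bool" where
  "nil_ideal I \<longleftrightarrow> is_ideal I \<and> I \<subseteq> Nil_set"

text \<open>Upper nilradical: the sum of all nil two-sided ideals, i.e. the smallest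
ideal containing every nil ideal.\<close>
definition upper_nilradical :: "'a::ring set" where
  "upper_nilradical = \<Inter>{J. is_ideal J \<and> (\<forall>I. nil_ideal I \<longrightarrow> I \<subseteq> J)}"

definition coset :: "'a::ring set \<Rightarrow> 'a \<Rightarrow> 'a set" where
  "coset I x = {x + i | i. i \<in> I}"

definition quot_carrier :: "'a::ring set \<Rightarrow> 'a set set" where
  "quot_carrier I = {coset I x | x. True}"

definition quot_mult :: "'a::ring set \<Rightarrow> 'a set \<Rightarrow> 'a set \<Rightarrow> 'a set" where
  "quot_mult I A B = coset I ((SOME a. a \<in> A) * (SOME b. b \<in> B))"

end

theory Submission imports Defs begin

lemma ideal_Inter: "is_ideal (upper_nilradical :: 'a::ring set)"
  unfolding upper_nilradical_def is_ideal_def by blast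

lemma ideal_add: "is_ideal I \<Longrightarrow> x \<in> I \<Longrightarrow> y \<in> I \<Longrightarrow> x + y \<in> I"
  unfolding is_ideal_def by (metis diff_0 diff_minus_eq_add)

definition nrel :: "'a::ring \<Rightarrow> 'a \<Rightarrow> bool" where
  "nrel x y \<longleftrightarrow> x - y \<in> (upper_nilradical :: 'a set)"

lemma nrel_equivp: "equivp (nrel :: 'a::ring \<Rightarrow> 'a \<Rightarrow> bool)"
proof (rule equivpI)
  have I: "is_ideal (upper_nilradical :: 'a set)" by (rule ideal_Inter)
  show "reflp (nrel :: 'a \<Rightarrow> 'a \<Rightarrow> bool)" using I unfolding reflp_def nrel_def is_ideal_def by simp
  show "symp (nrel :: 'a \<Rightarrow> 'a \<Rightarrow> bool)" using I unfolding symp_def nrel_def is_ideal_def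
    by (metis minus_diff_eq diff_0)
  show "transp (nrel :: 'a \<Rightarrow> 'a \<Rightarrow> bool)" unfolding transp_def nrel_def
  proof (intro allI impI)
    fix x y z :: 'a assume "x - y \<in> upper_nilradical" "y - z \<in> upper_nilradical"
    then have "(x - y) + (y - z) \<in> upper_nilradical" by (rule ideal_add[OF I])
    then show "x - z \<in> upper_nilradical" by simp
  qed
qed

quotient_type (overloaded) 'a nq = "'a::ring" / nrel
  by (rule nrel_equivp)

lemma I_ideal: "is_ideal (upper_nilradical :: 'a::ring set)" by (rule ideal_Inter)

instantiation nq :: (ring) ring
begin
lift_definition zero_nq :: "'a nq" is 0 .
lift_definition plus_nq :: "'a nq \<Rightarrow> 'a nq \<Rightarrow> 'a nq" is "(+)"
  proof -
  fix a b c d :: 'a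
  assume "nrel a b" "nrel c d"
  moreover have "a + c - (b + d) = (a - b) + (c - d)" by (simp add: algebra_simps)
  ultimately show "nrel (a + c) (b + d)" unfolding nrel_def using ideal_add[OF I_ideal] by metis
qed
lift_definition uminus_nq :: "'a nq \<Rightarrow> 'a nq" is uminus
  unfolding nrel_def using I_ideal unfolding is_ideal_def by (metis diff_0 minus_diff_eq minus_diff_commute minus_minus uminus_add_conv_diff)
lift_definition minus_nq :: "'a nq \<Rightarrow> 'a nq \<Rightarrow> 'a nq" is "(-)"
  unfolding nrel_def using I_ideal unfolding is_ideal_def proof -
  fix a b c d :: 'a
  assume "a - b \<in> upper_nilradical" "c - d \<in> upper_nilradical"
  moreover have "a - c - (b - d) = (a - b) - (c - d)" by (simp add: algebra_simps)
  ultimately show "a - c - (b - d) \<in> upper_nilradical" using I_ideal unfolding is_ideal_def by metis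
qed
lift_definition times_nq :: "'a nq \<Rightarrow> 'a nq \<Rightarrow> 'a nq" is "(*)"
proof -
  fix a b c d :: 'a
  assume "nrel a b" "nrel c d"
  hence ab: "a - b \<in> upper_nilradical" and cd: "c - d \<in> upper_nilradical" by (auto simp: nrel_def)
  have "a*c - b*d = (a - b)*c + b*(c - d)" by (simp add: algebra_simps)
  moreover have "(a - b)*c \<in> upper_nilradical" "b*(c - d) \<in> upper_nilradical"
    using ab cd I_ideal unfolding is_ideal_def by blast+
  ultimately show "nrel (a*c) (b*d)" unfolding nrel_def using ideal_add[OF I_ideal] by metis
qed
instance
  by intro_classes (transfer, simp add: nrel_def algebra_simps I_ideal[unfolded is_ideal_def])+
end

lemma abstract_idem:
  fixes e r :: "'b::ring" and M :: "'b set"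
  assumes ee: "e * e = e"
    and M0: "0 \<in> M"
    and Madd: "\<And>x y. x \<in> M \<Longrightarrow> y \<in> M \<Longrightarrow> x + y \<in> M"
    and Mdiff: "\<And>x y. x \<in> M \<Longrightarrow> y \<in> M \<Longrightarrow> x - y \<in> M"
    and Mmul: "\<And>x y. x \<in> M \<Longrightarrow> y \<in> M \<Longrightarrow> x * y \<in> M"
    and Msq: "\<And>x. x * x = 0 \<Longrightarrow> x \<in> M"
  shows "e*r - r*e \<in> M \<and> a*(e*r - r*e) \<in> M \<and> (e*r - r*e)*b \<in> M \<and> a*(e*r - r*e)*b \<in> M"
proof -
  have ee2: "e * (e * x) = e * x" for x using ee by (metis mult.assoc)
  define U where "U s = e*s - e*s*e" for s
  define V where "V s = s*e - e*s*e" for s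
  have UM: "U s \<in> M" for s
    by (rule Msq) (simp add: U_def algebra_simps ee2)
  have VM: "V s \<in> M" for s
    by (rule Msq) (simp add: V_def algebra_simps ee2)
  have aU: "a * U s = U (a*e*s) + V a * U s" for a s
    by (simp add: U_def V_def algebra_simps ee2)
  have Ub: "U s * b = U s * V b + U (s*b - s*e*b)" for s b
    by (simp add: U_def V_def algebra_simps ee2)
  have Vb: "V s * b = V (s*e*b) + V s * U b" for s b
    by (simp add: U_def V_def algebra_simps ee2)
  have aV: "a * V s = U a * V s + V (a*s - a*e*s)" for a s
    by (simp add: U_def V_def algebra_simps ee2)
  have UbM: "U s * b \<in> M" for s b
    by (subst Ub) (intro Madd Mmul UM VM)
  have VbM: "V s * b \<in> M" for s b
    by (subst Vb) (intro Madd Mmul UM VM)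
  have aUM: "a * U s \<in> M" for a s
    by (subst aU) (intro Madd Mmul UM VM)
  have aVM: "a * V s \<in> M" for a s
    by (subst aV) (intro Madd Mmul UM VM)
  have aUbM: "a * U s * b \<in> M" for a s b
  proof -
    have "a * U s * b = U (a*e*s) * b + V a * (U s * b)"
      by (subst aU) (simp add: distrib_right mult.assoc)
    also have "\<dots> \<in> M" by (intro Madd Mmul UbM VM)
    finally show ?thesis .
  qed
  have aVbM: "a * V s * b \<in> M" for a s b
  proof -
    have "a * V s * b = U a * (V s * b) + V (a*s - a*e*s) * b"
      by (subst aV) (simp add: distrib_right mult.assoc)
    also have "\<dots> \<in> M" by (intro Madd Mmul UM VbM)
    finally show ?thesis .
  qed
  have c: "e*r - r*e = U r - V r" by (simp add: U_def V_def)
  show ?thesis unfolding c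
    by (simp only: right_diff_distrib left_diff_distrib) (intro conjI Mdiff UM VM aUM aVM UbM VbM aUbM aVbM)
qed

definition Jset :: "'a::ring set" where
  "Jset = {x. \<forall>a b. nilpotent_el x \<and> nilpotent_el (a*x) \<and> nilpotent_el (x*b) \<and> nilpotent_el (a*x*b)}"

lemma I_eq_J:
  assumes sub: "is_subring (Nil_set :: 'a::ring set)"
  shows "(upper_nilradical :: 'a set) = Jset"
proof -
  have N: "x \<in> Nil_set \<Longrightarrow> y \<in> Nil_set \<Longrightarrow> x - y \<in> Nil_set" for x y :: 'a
    using sub unfolding is_subring_def by blast
  have N0: "(0::'a) \<in> Nil_set" using sub unfolding is_subring_def by blast
  have JI: "is_ideal (Jset :: 'a set)"
    unfolding is_ideal_def
  proof (intro conjI ballI allI)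
    show "(0::'a) \<in> Jset" using N0 unfolding Jset_def Nil_set_def by simp
  next
    fix x y :: 'a assume "x \<in> Jset" "y \<in> Jset"
    then show "x - y \<in> Jset" using N unfolding Jset_def Nil_set_def
      by (simp add: right_diff_distrib left_diff_distrib)
  next
    fix x r :: 'a assume x: "x \<in> Jset"
    have x': "nilpotent_el (a*x) \<and> nilpotent_el (x*b) \<and> nilpotent_el (a*x*b)" for a b
      using x unfolding Jset_def by blast
    show "r * x \<in> Jset" unfolding Jset_def mem_Collect_eq
    proof (intro allI conjI)
      fix a b
      show "nilpotent_el (r*x)" using x' by blast
      show "nilpotent_el (a*(r*x))" using x'[of "a*r"] by (simp add: mult.assoc)
      show "nilpotent_el (r*x*b)" using x'[of r b] by blast
      show "nilpotent_el (a*(r*x)*b)" using x'[of "a*r" b] by (simp add: mult.assoc)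
    qed
    show "x * r \<in> Jset" unfolding Jset_def mem_Collect_eq
    proof (intro allI conjI)
      fix a b
      show "nilpotent_el (x*r)" using x' by blast
      show "nilpotent_el (a*(x*r))" using x'[of a r] by (simp add: mult.assoc)
      show "nilpotent_el (x*r*b)" using x'[of a "r*b"] by (simp add: mult.assoc)
      show "nilpotent_el (a*(x*r)*b)" using x'[of a "r*b"] by (simp add: mult.assoc)
    qed
  qed
  have JN: "nil_ideal (Jset :: 'a set)" using JI unfolding nil_ideal_def Jset_def Nil_set_def by auto
  have nilJ: "nil_ideal I \<Longrightarrow> I \<subseteq> Jset" for I :: "'a set"
  proof
    fix x assume N: "nil_ideal I" and x: "x \<in> I"
    have ii: "\<forall>x\<in>I. \<forall>r. r * x \<in> I \<and> x * r \<in> I" and sn: "I \<subseteq> Nil_set"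
      using N unfolding nil_ideal_def is_ideal_def by auto
    have "x \<in> I \<and> a * x \<in> I \<and> x * b \<in> I \<and> a * x * b \<in> I" for a b
      using x ii by blast
    then show "x \<in> Jset" using sn unfolding Jset_def Nil_set_def by blast
  qed
  show ?thesis
  proof
    show "upper_nilradical \<subseteq> (Jset :: 'a set)" unfolding upper_nilradical_def using JI nilJ by blast
    show "(Jset :: 'a set) \<subseteq> upper_nilradical" unfolding upper_nilradical_def using JN by blast
  qed
qed

lemma abs_ops:
  "abs_nq (x + y) = abs_nq x + abs_nq y"
  "abs_nq (x - y) = abs_nq x - abs_nq y"
  "abs_nq (x * y) = abs_nq x * abs_nq y"
  "abs_nq 0 = 0"
  by (simp_all add: plus_nq.abs_eq minus_nq.abs_eq times_nq.abs_eq zero_nq.abs_eq)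

lemma core:
  assumes sub: "is_subring (Nil_set :: 'a::ring set)"
    and e: "e * e - e \<in> (upper_nilradical :: 'a set)"
  shows "e * r - r * e \<in> (upper_nilradical :: 'a set)"
proof -
  have N: "x \<in> Nil_set \<Longrightarrow> y \<in> Nil_set \<Longrightarrow> x - y \<in> Nil_set \<and> x + y \<in> Nil_set \<and> x * y \<in> Nil_set" for x y :: 'a
    using sub unfolding is_subring_def by blast
  have N0: "(0::'a) \<in> Nil_set" using sub unfolding is_subring_def by blast
  have IN: "(upper_nilradical :: 'a set) \<subseteq> Nil_set"
    unfolding I_eq_J[OF sub] Jset_def Nil_set_def by auto
  have eqI: "abs_nq x = abs_nq y \<longleftrightarrow> x - y \<in> upper_nilradical" for x y :: 'a
    by (simp add: nq.abs_eq_iff nrel_def)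
  have sq: "x * x \<in> Nil_set \<Longrightarrow> x \<in> Nil_set" for x :: 'a
  proof -
    assume "x * x \<in> Nil_set"
    then obtain n where "rpow (x*x) n = 0" unfolding Nil_set_def nilpotent_el_def by auto
    moreover have "rpow (x*x) n = rpow x (Suc (2*n))" for n
      by (induction n) (simp_all add: mult.assoc)
    ultimately have "rpow x (Suc (2*n)) = 0" by simp
    then show "x \<in> Nil_set" unfolding Nil_set_def nilpotent_el_def by blast
  qed
  have bk: "abs_nq x \<in> image abs_nq Nil_set \<Longrightarrow> x \<in> Nil_set" for x :: 'a
  proof -
    assume "abs_nq x \<in> image abs_nq Nil_set"
    then obtain y where y: "y \<in> Nil_set" "abs_nq x = abs_nq y" by auto
    then have "x - y \<in> Nil_set" using eqI IN by blast
    then have "(x - y) + y \<in> Nil_set" using N y(1) by blast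
    then show ?thesis by simp
  qed
  define M where "M = image abs_nq (Nil_set :: 'a set)"
  have "abs_nq e * abs_nq e = abs_nq e" using e eqI abs_ops by metis
  then have res: "abs_nq e * q - q * abs_nq e \<in> M \<and> p * (abs_nq e * q - q * abs_nq e) \<in> M
     \<and> (abs_nq e * q - q * abs_nq e) * s \<in> M \<and> p * (abs_nq e * q - q * abs_nq e) * s \<in> M" for p q s
  proof (rule abstract_idem)
    show "0 \<in> M" unfolding M_def using N0 abs_ops(4) by force
    fix x y assume "x \<in> M" "y \<in> M"
    then obtain x' y' where xy: "x' \<in> Nil_set" "y' \<in> Nil_set" "x = abs_nq x'" "y = abs_nq y'"
      unfolding M_def by auto
    have "x + y = abs_nq (x' + y')" "x - y = abs_nq (x' - y')" "x * y = abs_nq (x' * y')"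
      using xy by (simp_all add: abs_ops)
    moreover have "x' + y' \<in> Nil_set" "x' - y' \<in> Nil_set" "x' * y' \<in> Nil_set"
      using N[OF xy(1,2)] by auto
    ultimately show "x + y \<in> M" "x - y \<in> M" "x * y \<in> M" unfolding M_def by auto
  next
    fix x :: "'a nq" assume x0: "x * x = 0"
    obtain x' where x': "x = abs_nq x'" by (metis Quotient_nq Quotient_abs_rep)
    have "abs_nq (x' * x') = abs_nq 0" using x0 x' abs_ops by metis
    then have "x' * x' \<in> Nil_set" using eqI IN by force
    then show "x \<in> M" unfolding M_def x' using sq by blast
  qed
  have "e * r - r * e \<in> Jset" unfolding Jset_def mem_Collect_eq
  proof (intro allI conjI)
    fix a b :: 'a
    have "abs_nq (e * r - r * e) \<in> M" "abs_nq (a * (e * r - r * e)) \<in> M"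
      "abs_nq ((e * r - r * e) * b) \<in> M" "abs_nq (a * (e * r - r * e) * b) \<in> M"
      using res[of "abs_nq r" "abs_nq a" "abs_nq b"] by (simp_all add: abs_ops)
    then have "e * r - r * e \<in> Nil_set" "a * (e * r - r * e) \<in> Nil_set"
      "(e * r - r * e) * b \<in> Nil_set" "a * (e * r - r * e) * b \<in> Nil_set"
      unfolding M_def using bk by blast+
    then show "nilpotent_el (e * r - r * e)" "nilpotent_el (a * (e * r - r * e))"
      "nilpotent_el ((e * r - r * e) * b)" "nilpotent_el (a * (e * r - r * e) * b)"
      unfolding Nil_set_def mem_Collect_eq .
  qed
  then show ?thesis using I_eq_J[OF sub] by simp
qed


lemma coset_eq:
  assumes I: "is_ideal I"
  shows "coset I x = coset I y \<longleftrightarrow> x - y \<in> I"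
proof
  assume "coset I x = coset I y"
  moreover have "x \<in> coset I x" unfolding coset_def using I unfolding is_ideal_def by force
  ultimately obtain i where "i \<in> I" "x = y + i" unfolding coset_def by auto
  then show "x - y \<in> I" by simp
next
  assume xy: "x - y \<in> I"
  show "coset I x = coset I y"
  proof (rule set_eqI)
    fix z
    have a: "z \<in> coset I x" if "z \<in> coset I y" "x - y \<in> I" for x y
    proof -
      from that obtain i where i: "i \<in> I" "z = y + i" unfolding coset_def by auto
      have "i - (x - y) \<in> I" using i that(2) I unfolding is_ideal_def by blast
      moreover have "z = x + (i - (x - y))" using i by (simp add: algebra_simps)
      ultimately show ?thesis unfolding coset_def by blast
    qed
    have "y - x \<in> I" using xy I unfolding is_ideal_def by (metis diff_0 minus_diff_eq)
    then show "z \<in> coset I x \<longleftrightarrow> z \<in> coset I y" using a xy by blast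
  qed
qed

lemma some_coset:
  assumes I: "is_ideal I"
  shows "(SOME a. a \<in> coset I x) - x \<in> I"
proof -
  have "x \<in> coset I x" unfolding coset_def using I unfolding is_ideal_def by force
  then have "(SOME a. a \<in> coset I x) \<in> coset I x" by (rule someI)
  then show ?thesis unfolding coset_def by auto
qed

theorem proposition3p1:
  assumes "is_subring (Nil_set :: 'a::ring set)"
  shows "\<forall>E\<in>quot_carrier (upper_nilradical :: 'a set).
           quot_mult upper_nilradical E E = E \<longrightarrow>
           (\<forall>A\<in>quot_carrier upper_nilradical.
              quot_mult upper_nilradical E A = quot_mult upper_nilradical A E)"
proof (intro ballI impI)
  let ?I = "upper_nilradical :: 'a set"
  have I: "is_ideal ?I" by (rule I_ideal)
  fix E A assume E: "E \<in> quot_carrier ?I" and EE: "quot_mult ?I E E = E" and A: "A \<in> quot_carrier ?I"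
  obtain x where x: "E = coset ?I x" using E unfolding quot_carrier_def by auto
  obtain y where y: "A = coset ?I y" using A unfolding quot_carrier_def by auto
  define e where "e = (SOME a. a \<in> coset ?I x)"
  define r where "r = (SOME a. a \<in> coset ?I y)"
  have ex: "e - x \<in> ?I" unfolding e_def by (rule some_coset[OF I])
  have Ee: "E = coset ?I e" unfolding x coset_eq[OF I] using ex I unfolding is_ideal_def
    by (metis diff_0 minus_diff_eq)
  have "coset ?I (e * e) = coset ?I e" using EE Ee unfolding quot_mult_def x e_def by simp
  then have "e * e - e \<in> ?I" using coset_eq[OF I] by blast
  then have "e * r - r * e \<in> ?I" by (rule core[OF assms])
  then show "quot_mult ?I E A = quot_mult ?I A E"
    unfolding quot_mult_def x y e_def[symmetric] r_def[symmetric] coset_eq[OF I] .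
qed

end
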